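(* Let $n\in\mathbb{N}$, $h_0>0$, $h_1,\ldots,h_n\in\mathbb{C}$, and $H(z)\coloneq h_0+2\sum_{k=1}^nh_kz^k$. There is exactly one such polynomial $H$ (for given $h_0$) satisfying all of: $\operatorname{Re}H(z)>0$ for all $z\in\Delta$; $h_n>0$; the zeros of $\operatorname{Re}H$ on the unit circle are exactly the $n$-th roots of $-1$. Namely, $H(z)=h_0(1+z^n)$.
   Context: $\Delta=\{z\in\mathbb{C}:|z|<1\}$ is the open unit disk. *)

theory Defs
  imports Complex_Main
begin

definition Hpoly :: "nat \<Rightarrow> real \<Rightarrow> (nat \<Rightarrow> complex) \<Rightarrow> complex \<Rightarrow> complex" where
  "Hpoly n h0 h z = complex_of_real h0 + 2 * (\<Sum>k=1..n. h k * z ^ k)"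

definition good_H :: "nat \<Rightarrow> real \<Rightarrow> (nat \<Rightarrow> complex) \<Rightarrow> bool" where
  "good_H n h0 h \<longleftrightarrow>
     (\<forall>z. norm z < 1 \<longrightarrow> Re (Hpoly n h0 h z) > 0) \<and>
     (h n \<in> \<real> \<and> Re (h n) > 0) \<and>
     {z. norm z = 1 \<and> Re (Hpoly n h0 h z) = 0} = {z. z ^ n = -1}"

end

theory Submission imports Defs "HOL-Analysis.Analysis" begin

definition th :: "nat \<Rightarrow> nat \<Rightarrow> real" where "th n j = (2 * real j + 1) * pi / real n"

lemma S_eval:
  fixes p :: int and n :: nat
  assumes "n \<ge> 1"
  shows "(\<Sum>j<n. cis (of_int p * th n j)) =
         (if int n dvd p then of_nat n * cis (of_int p * pi / real n) else 0)"
proof -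
  define w where "w = cis (2 * of_int p * pi / real n)"
  have e: "cis (of_int p * th n j) = cis (of_int p * pi / real n) * w ^ j" for j
  proof -
    have "cis (of_int p * pi / real n) * w ^ j = cis (of_int p * pi / real n + real j * (2 * of_int p * pi / real n))"
      unfolding w_def by (simp only: Complex.DeMoivre cis_mult)
    also have "\<dots> = cis (of_int p * th n j)" unfolding th_def
      by (rule arg_cong[where f=cis]) (simp add: field_simps add_divide_distrib)
    finally show ?thesis by simp
  qed
  have sum: "(\<Sum>j<n. cis (of_int p * th n j)) = cis (of_int p * pi / real n) * (\<Sum>j<n. w ^ j)"
    by (simp add: e sum_distrib_left)
  have wn: "w ^ n = 1"
  proof -
    have "w ^ n = cis (2 * pi * of_int p)" unfolding w_def Complex.DeMoivre using assms by (simp add: field_simps)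
    also have "\<dots> = 1" by (rule cis_multiple_2pi) simp
    finally show ?thesis .
  qed
  show ?thesis
  proof (cases "int n dvd p")
    case True
    then obtain q where q: "p = int n * q" by (elim dvdE)
    have "w = cis (2 * pi * of_int q)" unfolding w_def q using assms by (simp add: field_simps)
    then have "w = 1" by simp
    then show ?thesis using True sum by simp
  next
    case False
    have "w \<noteq> 1"
    proof
      assume "w = 1"
      then have "cos (2 * of_int p * pi / real n) = 1" unfolding w_def
        by (metis cis.sel(1) one_complex.sel(1))
      then obtain q :: int where q: "2 * of_int p * pi / real n = of_int q * 2 * pi"
        by (auto simp: cos_one_2pi_int)
      then have "real_of_int p = real n * of_int q" using assms by (simp add: field_simps)
      then have "p = int n * q" by (metis of_int_eq_iff of_int_mult of_int_of_nat_eq)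
      then show False using False by simp
    qed
    then have "(\<Sum>j<n. w ^ j) = 0" by (simp add: geometric_sum wn)
    then show ?thesis using False sum by simp
  qed
qed

definition Sm :: "nat \<Rightarrow> int \<Rightarrow> complex" where
  "Sm n p = (\<Sum>j<n. cis (of_int p * th n j))"

lemma Sm_eval: "n \<ge> 1 \<Longrightarrow> Sm n p = (if int n dvd p then of_nat n * cis (of_int p * pi / real n) else 0)"
  unfolding Sm_def by (rule S_eval)

lemma Phi:
  "(\<Sum>j<n. (\<Sum>k=1..n. c k * cis (real k * th n j)) * cis (of_int p * th n j))
     = (\<Sum>k=1..n. c k * Sm n (int k + p))"
proof -
  have "(\<Sum>j<n. (\<Sum>k=1..n. c k * cis (real k * th n j)) * cis (of_int p * th n j))
     = (\<Sum>j<n. \<Sum>k=1..n. c k * cis (of_int (int k + p) * th n j))"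
    by (simp add: sum_distrib_right cis_mult mult.assoc distrib_right)
  also have "\<dots> = (\<Sum>k=1..n. \<Sum>j<n. c k * cis (of_int (int k + p) * th n j))"
    by (rule sum.swap)
  also have "\<dots> = (\<Sum>k=1..n. c k * Sm n (int k + p))"
    by (simp add: Sm_def sum_distrib_left)
  finally show ?thesis .
qed

lemma dvd_range:
  fixes x :: int
  assumes "n \<ge> 1" "- int n < x" "x < 2 * int n" "int n dvd x"
  shows "x = 0 \<or> x = int n"
proof -
  obtain q where q: "x = int n * q" using assms(4) by (elim dvdE)
  have "q > -1"
  proof (rule ccontr)
    assume "\<not> q > -1"
    then have "int n * q \<le> int n * (-1)" by (intro mult_left_mono) auto
    then show False using assms(2) q by simp
  qed
  moreover have "q < 2"
  proof (rule ccontr)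
    assume "\<not> q < 2"
    then have "int n * 2 \<le> int n * q" by (intro mult_left_mono) auto
    then show False using assms(3) q by simp
  qed
  ultimately have "q = 0 \<or> q = 1" by auto
  then show ?thesis using q by auto
qed

lemma T_neg:
  assumes "1 \<le> m" "m < n"
  shows "(\<Sum>k=1..n. c k * Sm n (int k - int m)) = of_nat n * c m"
proof -
  have "(\<Sum>k=1..n. c k * Sm n (int k - int m)) = (\<Sum>k\<in>{1..n}. if k = m then of_nat n * c m else 0)"
  proof (rule sum.cong)
    fix k assume k: "k \<in> {1..n}"
    show "c k * Sm n (int k - int m) = (if k = m then of_nat n * c m else 0)"
    proof (cases "k = m")
      case True then show ?thesis using assms by (simp add: Sm_eval)
    next
      case False
      have "\<not> int n dvd (int k - int m)"
        using dvd_range[of n "int k - int m"] k assms False by auto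
      then show ?thesis using False assms by (simp add: Sm_eval)
    qed
  qed simp
  also have "\<dots> = of_nat n * c m" using assms by simp
  finally show ?thesis .
qed

lemma T_pos:
  assumes "1 \<le> m" "m < n"
  shows "(\<Sum>k=1..n. c k * Sm n (int k + int m)) = - of_nat n * c (n - m)"
proof -
  have "(\<Sum>k=1..n. c k * Sm n (int k + int m)) = (\<Sum>k\<in>{1..n}. if k = n - m then - of_nat n * c (n - m) else 0)"
  proof (rule sum.cong)
    fix k assume k: "k \<in> {1..n}"
    show "c k * Sm n (int k + int m) = (if k = n - m then - of_nat n * c (n - m) else 0)"
    proof (cases "k = n - m")
      case True
      then have "int k + int m = int n" using assms by simp
      then show ?thesis using assms True by (simp add: Sm_eval)
    next
      case False
      have "\<not> int n dvd (int k + int m)"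
        using dvd_range[of n "int k + int m"] k assms False by auto
      then show ?thesis using False assms by (simp add: Sm_eval)
    qed
  qed simp
  also have "\<dots> = - of_nat n * c (n - m)" using assms by simp
  finally show ?thesis .
qed

lemma T_zero:
  assumes "1 \<le> n"
  shows "(\<Sum>k=1..n. c k * Sm n (int k)) = - of_nat n * c n"
proof -
  have "(\<Sum>k=1..n. c k * Sm n (int k)) = (\<Sum>k\<in>{1..n}. if k = n then - of_nat n * c n else 0)"
  proof (rule sum.cong)
    fix k assume k: "k \<in> {1..n}"
    show "c k * Sm n (int k) = (if k = n then - of_nat n * c n else 0)"
    proof (cases "k = n")
      case True
      then show ?thesis using assms True by (simp add: Sm_eval)
    next
      case False
      have "\<not> int n dvd (int k)"
        using dvd_range[of n "int k"] k assms False by auto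
      then show ?thesis using False assms by (simp add: Sm_eval)
    qed
  qed simp
  also have "\<dots> = - of_nat n * c n" using assms by simp
  finally show ?thesis .
qed

lemma nonneg_circle:
  assumes "\<forall>z. norm z < 1 \<longrightarrow> Re (Hpoly n h0 h z) > 0" "norm z \<le> 1"
  shows "0 \<le> Re (Hpoly n h0 h z)"
proof -
  have cl: "closed {z. 0 \<le> Re (Hpoly n h0 h z)}"
    unfolding Hpoly_def by (intro closed_Collect_le continuous_intros)
  have "ball 0 1 \<subseteq> {z. 0 \<le> Re (Hpoly n h0 h z)}"
    using assms(1) by (auto simp: less_imp_le)
  then have "closure (ball (0::complex) 1) \<subseteq> {z. 0 \<le> Re (Hpoly n h0 h z)}"
    using cl by (rule closure_minimal)
  then show ?thesis using assms(2) by auto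
qed

lemma deriv_cond:
  assumes nn: "\<forall>z. norm z = 1 \<longrightarrow> 0 \<le> Re (Hpoly n h0 h z)" and w: "norm w = 1"
    and z0: "Re (Hpoly n h0 h w) = 0"
  shows "Im (\<Sum>k=1..n. of_nat k * h k * w ^ k) = 0"
proof -
  define c where "c k = h k * w ^ k" for k
  define f where "f t = h0 + 2 * (\<Sum>k=1..n. Re (c k) * cos (real k * t) - Im (c k) * sin (real k * t))" for t
  have fe: "f t = Re (Hpoly n h0 h (w * cis t))" for t
  proof -
    have "h k * (w * cis t) ^ k = c k * cis (real k * t)" for k
      by (simp add: c_def power_mult_distrib Complex.DeMoivre mult.assoc)
    then show ?thesis unfolding f_def Hpoly_def by (simp add: Re_sum)
  qed
  have min: "\<forall>y. \<bar>0 - y\<bar> < 1 \<longrightarrow> f 0 \<le> f y"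
  proof (intro allI impI)
    fix y :: real
    have "f 0 = 0" using fe[of 0] z0 by simp
    moreover have "0 \<le> f y" unfolding fe using nn w by (simp add: norm_mult)
    ultimately show "f 0 \<le> f y" by simp
  qed
  have D: "(f has_real_derivative (- 2 * (\<Sum>k=1..n. real k * Im (c k)))) (at 0)"
    unfolding f_def[abs_def]
    by (auto intro!: derivative_eq_intros simp: sum_negf sum_distrib_left algebra_simps)
  have "(\<Sum>k=1..n. real k * Im (c k)) = 0"
    using DERIV_local_min[OF D _ min] by simp
  moreover have "Im (\<Sum>k=1..n. of_nat k * h k * w ^ k) = (\<Sum>k=1..n. real k * Im (c k))"
    by (simp add: Im_sum c_def mult.assoc)
  ultimately show ?thesis by simp
qed


lemma existence:
  fixes n :: nat and h0 :: real
  assumes "n \<ge> 1" and "h0 > 0"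
  shows "\<exists>h. good_H n h0 h"
proof -
  define h where "h = (\<lambda>k. if k = n then complex_of_real (h0/2) else 0)"
  have Hf: "Hpoly n h0 h z = of_real h0 * (1 + z ^ n)" for z
  proof -
    have "(\<Sum>k=1..n. h k * z ^ k) = (\<Sum>k\<in>{1..n}. if k = n then complex_of_real (h0/2) * z ^ n else 0)"
      by (rule sum.cong) (auto simp: h_def)
    also have "\<dots> = complex_of_real (h0/2) * z ^ n" using assms by simp
    finally show ?thesis unfolding Hpoly_def by (simp add: algebra_simps)
  qed
  have a: "0 < Re (Hpoly n h0 h z)" if "norm z < 1" for z
  proof -
    have "norm z ^ n < 1 ^ n" using that assms by (intro power_strict_mono) auto
    then have "norm (z ^ n) < 1" by (simp add: norm_power)
    then have "- 1 < Re (z ^ n)" using abs_Re_le_cmod[of "z ^ n"] by linarith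
    then have "0 < 1 + Re (z ^ n)" by simp
    then show ?thesis unfolding Hf using assms by simp
  qed
  have c: "{z. norm z = 1 \<and> Re (Hpoly n h0 h z) = 0} = {z. z ^ n = -1}"
  proof (intro set_eqI iffI; simp only: mem_Collect_eq)
    fix z :: complex assume z: "norm z = 1 \<and> Re (Hpoly n h0 h z) = 0"
    then have r: "Re (z ^ n) = -1" unfolding Hf using assms by simp
    have "norm (z ^ n) = 1" using z by (simp add: norm_power)
    then have "Re (z ^ n) ^ 2 + Im (z ^ n) ^ 2 = 1" unfolding cmod_def by simp
    then have "Im (z ^ n) = 0" using r by simp
    then show "z ^ n = -1" using r by (simp add: complex_eq_iff)
  next
    fix z :: complex assume z: "z ^ n = -1"
    have "norm (z ^ n) = 1" using z by simp
    then have "norm z ^ n = 1 ^ n" by (simp add: norm_power)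
    then have "norm z = 1" by (rule power_eq_imp_eq_base) (use assms in auto)
    then show "norm z = 1 \<and> Re (Hpoly n h0 h z) = 0" unfolding Hf using z by simp
  qed
  have b: "h n \<in> \<real> \<and> Re (h n) > 0" using assms by (simp add: h_def)
  have "good_H n h0 h" unfolding good_H_def using a b c by blast
  then show ?thesis by blast
qed

lemma uniqueness:
  fixes n :: nat and h0 :: real
  assumes n1: "n \<ge> 1" and "h0 > 0" and g: "good_H n h0 h"
  shows "Hpoly n h0 h z = complex_of_real h0 * (1 + z ^ n)"
proof -
  have pos: "\<forall>z. norm z < 1 \<longrightarrow> Re (Hpoly n h0 h z) > 0"
    and hn: "h n \<in> \<real>" and zs: "{z. norm z = 1 \<and> Re (Hpoly n h0 h z) = 0} = {z. z ^ n = -1}"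
    using g unfolding good_H_def by auto
  have nn: "\<forall>z. norm z = 1 \<longrightarrow> 0 \<le> Re (Hpoly n h0 h z)"
    using nonneg_circle[OF pos] by simp
  define A where "A j = (\<Sum>k=1..n. h k * cis (real k * th n j))" for j
  define B where "B j = (\<Sum>k=1..n. (of_nat k * h k) * cis (real k * th n j))" for j
  have wn: "cis (th n j) ^ n = -1" for j
  proof -
    have "cis (th n j) ^ n = cis (2 * pi * real j + pi)"
      unfolding Complex.DeMoivre th_def using n1 by (intro arg_cong[where f=cis]) (simp add: field_simps)
    also have "\<dots> = cis (2 * pi * real j) * cis pi" by (simp only: cis_mult)
    also have "\<dots> = -1" by (simp add: Ints_of_nat)
    finally show ?thesis .
  qed
  have zj: "norm (cis (th n j)) = 1 \<and> Re (Hpoly n h0 h (cis (th n j))) = 0" for j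
    using wn[of j] zs by blast
  have ReA: "Re (A j) = - h0 / 2" for j
  proof -
    have "Hpoly n h0 h (cis (th n j)) = of_real h0 + 2 * A j"
      unfolding Hpoly_def A_def by (simp add: Complex.DeMoivre)
    then show ?thesis using zj[of j] by simp
  qed
  have ImB: "Im (B j) = 0" for j
  proof -
    have "(\<Sum>k=1..n. of_nat k * h k * cis (th n j) ^ k) = B j"
      unfolding B_def by (simp add: Complex.DeMoivre)
    then show ?thesis using deriv_cond[OF nn _ conjunct2[OF zj[of j]]] zj[of j] by simp
  qed
  have E1: "(\<Sum>k=1..n. h k * Sm n (int k + p)) + cnj (\<Sum>k=1..n. h k * Sm n (int k + - p))
      = - of_real h0 * Sm n p" for p
  proof -
    have L1: "(\<Sum>k=1..n. h k * Sm n (int k + p)) = (\<Sum>j<n. A j * cis (of_int p * th n j))"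
      unfolding A_def by (rule Phi[symmetric])
    have L2: "(\<Sum>k=1..n. h k * Sm n (int k + - p)) = (\<Sum>j<n. A j * cis (of_int (- p) * th n j))"
      unfolding A_def by (rule Phi[symmetric])
    have L3: "cnj (\<Sum>j<n. A j * cis (of_int (- p) * th n j)) = (\<Sum>j<n. cnj (A j) * cis (of_int p * th n j))"
      by (simp add: cis_cnj)
    have "(\<Sum>k=1..n. h k * Sm n (int k + p)) + cnj (\<Sum>k=1..n. h k * Sm n (int k + - p))
       = (\<Sum>j<n. (A j + cnj (A j)) * cis (of_int p * th n j))"
      unfolding L1 L2 L3 by (simp only: distrib_right sum.distrib)
    also have "\<dots> = (\<Sum>j<n. - of_real h0 * cis (of_int p * th n j))"
      by (rule sum.cong) (simp_all add: complex_add_cnj ReA)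
    also have "\<dots> = - of_real h0 * Sm n p" unfolding Sm_def by (simp add: sum_distrib_left)
    finally show ?thesis .
  qed
  have E2: "(\<Sum>k=1..n. (of_nat k * h k) * Sm n (int k + p)) - cnj (\<Sum>k=1..n. (of_nat k * h k) * Sm n (int k + - p))
      = 0" for p
  proof -
    have L1: "(\<Sum>k=1..n. (of_nat k * h k) * Sm n (int k + p)) = (\<Sum>j<n. B j * cis (of_int p * th n j))"
      unfolding B_def by (rule Phi[symmetric])
    have L2: "(\<Sum>k=1..n. (of_nat k * h k) * Sm n (int k + - p)) = (\<Sum>j<n. B j * cis (of_int (- p) * th n j))"
      unfolding B_def by (rule Phi[symmetric])
    have L3: "cnj (\<Sum>j<n. B j * cis (of_int (- p) * th n j)) = (\<Sum>j<n. cnj (B j) * cis (of_int p * th n j))"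
      by (simp add: cis_cnj)
    have "(\<Sum>k=1..n. (of_nat k * h k) * Sm n (int k + p)) - cnj (\<Sum>k=1..n. (of_nat k * h k) * Sm n (int k + - p))
       = (\<Sum>j<n. (B j - cnj (B j)) * cis (of_int p * th n j))"
      unfolding L1 L2 L3 by (simp only: left_diff_distrib sum_subtractf)
    also have "\<dots> = 0"
      by (rule sum.neutral) (simp add: complex_diff_cnj ImB)
    finally show ?thesis .
  qed
  have hm: "h m = 0" if m: "1 \<le> m" "m < n" for m
  proof -
    have Sm0: "Sm n (- int m) = 0"
    proof -
      have "\<not> int n dvd (- int m)" using m by (auto dest!: zdvd_imp_le)
      then show ?thesis using n1 by (simp add: Sm_eval)
    qed
    have a1: "(\<Sum>k=1..n. h k * Sm n (int k + - int m)) = of_nat n * h m"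
      using T_neg[OF m, of h] by simp
    have b1: "(\<Sum>k=1..n. h k * Sm n (int k + - (- int m))) = - of_nat n * h (n - m)"
      using T_pos[OF m, of h] by simp
    have a2: "(\<Sum>k=1..n. (of_nat k * h k) * Sm n (int k + - int m)) = of_nat n * (of_nat m * h m)"
      using T_neg[OF m, of "\<lambda>k. of_nat k * h k"] by simp
    have b2: "(\<Sum>k=1..n. (of_nat k * h k) * Sm n (int k + - (- int m))) = - of_nat n * (of_nat (n - m) * h (n - m))"
      using T_pos[OF m, of "\<lambda>k. of_nat k * h k"] by simp
    have e1: "of_nat n * h m + cnj (- of_nat n * h (n - m)) = 0"
      using E1[of "- int m"] unfolding a1 b1 Sm0 by simp
    have e2: "of_nat n * (of_nat m * h m) - cnj (- of_nat n * (of_nat (n - m) * h (n - m))) = 0"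
      using E2[of "- int m"] unfolding a2 b2 by simp
    define Y where "Y = cnj (h (n - m))"
    have nz: "(of_nat n :: complex) \<noteq> 0" using n1 by simp
    have "h m = Y" using e1 nz unfolding Y_def by (simp add: algebra_simps)
    moreover have "of_nat n * of_nat m * h m + of_nat n * (of_nat n - of_nat m) * Y = 0"
    proof -
      have d: "(of_nat (n - m)::complex) = of_nat n - of_nat m" using m by (simp add: of_nat_diff)
      show ?thesis using e2 unfolding d Y_def by (simp add: mult.assoc)
    qed
    ultimately have "of_nat n * of_nat m * h m + of_nat n * (of_nat n - of_nat m) * h m = 0" by simp
    then have "of_nat n * of_nat n * h m = 0" by (simp add: algebra_simps)
    then show ?thesis using nz by simp
  qed
  obtain r where r: "h n = of_real r" using hn by (auto elim: Reals_cases)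
  have S0: "Sm n 0 = of_nat n" using n1 by (simp add: Sm_eval)
  have "- of_nat n * h n + cnj (- of_nat n * h n) = - of_real h0 * Sm n 0"
    using E1[of 0] unfolding add_0_right minus_zero T_zero[OF n1, of h] .
  then have "- of_nat n * h n + cnj (- of_nat n * h n) = - of_real h0 * of_nat n" unfolding S0 .
  then have "complex_of_real (- 2 * real n * r) = complex_of_real (- h0 * real n)"
    unfolding r by simp
  then have "- 2 * real n * r = - h0 * real n" by (simp only: of_real_eq_iff)
  then have rr: "r = h0 / 2" using n1 by simp
  have "(\<Sum>k=1..n. h k * z ^ k) = (\<Sum>k\<in>{1..n}. if k = n then complex_of_real (h0/2) * z ^ n else 0)"
  proof (rule sum.cong)
    fix k assume k: "k \<in> {1..n}"
    show "h k * z ^ k = (if k = n then complex_of_real (h0/2) * z ^ n else 0)"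
    proof (cases "k = n")
      case True then show ?thesis using r rr by simp
    next
      case False then show ?thesis using hm[of k] k by simp
    qed
  qed simp
  also have "\<dots> = complex_of_real (h0/2) * z ^ n" using n1 by simp
  finally show ?thesis unfolding Hpoly_def by (simp add: algebra_simps)
qed

theorem mainTheorem6:
  fixes n :: nat and h0 :: real
  assumes "n \<ge> 1" and "h0 > 0"
  shows "(\<exists>h. good_H n h0 h) \<and>
         (\<forall>h. good_H n h0 h \<longrightarrow> (\<forall>z. Hpoly n h0 h z = complex_of_real h0 * (1 + z ^ n)))"
  using existence[OF assms] uniqueness[OF assms] by blast

end
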